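(* Let $G$ be the mixed graph on nodes $\{a,b,c,d\}$ with directed edges $a\to b$, $a\to c$, $a\to d$ and bidirected edges $a\leftrightarrow b$, $a\leftrightarrow c$, $a\leftrightarrow d$ (and no other edges). Then every $\Sigma\in\mathcal M(G)$ satisfies $$\rho_{bc.a}\cdot\rho_{cd.a}\cdot\rho_{bd.a}\le 0.$$ Moreover, there is a nonempty open subset of the set of positive definite $4\times4$ matrices (e.g. a neighbourhood of the matrix with $\sigma_{aa}=\sigma_{bb}=\sigma_{cc}=\sigma_{dd}=1$, $\sigma_{ab}=\sigma_{ac}=\sigma_{ad}=0$, $\sigma_{bc}=\sigma_{bd}=\sigma_{cd}=1/2$) violating this inequality, so $\mathcal M(G)$ differs from the set of all positive definite $4\times 4$ matrices by a set of positive measure.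
   Context: $\mathcal M(G)=\{(I-\Lambda)^{-T}\Omega(I-\Lambda)^{-1}\}$ where $\Lambda$ ranges over real $4\times4$ matrices with $\Lambda_{vw}\neq 0$ only for directed edges $v\to w$, and $\Omega$ over positive definite matrices with $\Omega_{vw}=0$ for distinct $v,w$ not joined by a bidirected edge. For a covariance matrix $\Sigma=(\sigma_{vw})$, the partial correlation is $\rho_{xy.a}=(\sigma_{xy}\sigma_{aa}-\sigma_{xa}\sigma_{ya})/\sqrt{(\sigma_{xx}\sigma_{aa}-\sigma_{xa}^2)(\sigma_{yy}\sigma_{aa}-\sigma_{ya}^2)}$. *)

theory Defs
  imports "HOL-Analysis.Analysis"
begin

datatype node = na | nb | nc | nd

lemma UNIV_node: "(UNIV :: node set) = {na, nb, nc, nd}"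
  using node.exhaust by auto

instance node :: finite
  by standard (simp add: UNIV_node)

type_synonym mat4 = "real ^ node ^ node"

definition pos_def :: "mat4 \<Rightarrow> bool" where
  "pos_def M \<longleftrightarrow> transpose M = M \<and> (\<forall>x :: real ^ node. x \<noteq> 0 \<longrightarrow> x \<bullet> (M *v x) > 0)"

definition dir_edge :: "node \<Rightarrow> node \<Rightarrow> bool" where
  "dir_edge v w \<longleftrightarrow> v = na \<and> w \<in> {nb, nc, nd}"

definition bi_edge :: "node \<Rightarrow> node \<Rightarrow> bool" where
  "bi_edge v w \<longleftrightarrow> (v = na \<and> w \<in> {nb, nc, nd}) \<or> (w = na \<and> v \<in> {nb, nc, nd})"

definition model_G :: "mat4 set" where
  "model_G = {transpose (matrix_inv (mat 1 - L)) ** Om ** matrix_inv (mat 1 - L) | L Om.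
      (\<forall>v w. \<not> dir_edge v w \<longrightarrow> L $ v $ w = 0) \<and>
      pos_def Om \<and>
      (\<forall>v w. v \<noteq> w \<and> \<not> bi_edge v w \<longrightarrow> Om $ v $ w = 0)}"

definition pcorr :: "mat4 \<Rightarrow> node \<Rightarrow> node \<Rightarrow> node \<Rightarrow> real" where
  "pcorr S x y a =
     (S $ x $ y * S $ a $ a - S $ x $ a * S $ y $ a) /
     sqrt ((S $ x $ x * S $ a $ a - (S $ x $ a)^2) * (S $ y $ y * S $ a $ a - (S $ y $ a)^2))"

definition Sigma0 :: mat4 where
  "Sigma0 = (\<chi> v w. if v = w then 1 else if v = na \<or> w = na then 0 else 1/2)"

end

theory Submission imports Defs begin

lemma minv:
  fixes A B :: mat4
  assumes "A ** B = mat 1" "B ** A = mat 1"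
  shows "matrix_inv A = B"
proof -
  let ?P = "\<lambda>A'::mat4. A ** A' = mat 1 \<and> A' ** A = mat 1"
  have "?P (matrix_inv A)" unfolding matrix_inv_def by (rule someI[of ?P B]) (use assms in auto)
  then have "matrix_inv A = (B ** A) ** matrix_inv A" using assms by (simp add: matrix_mul_lid)
  also have "\<dots> = B" using \<open>?P (matrix_inv A)\<close> by (simp add: matrix_mul_assoc[symmetric] matrix_mul_rid)
  finally show ?thesis .
qed

lemma sum_node: "(\<Sum>k\<in>(UNIV::node set). f k) = f na + f nb + f nc + f nd"
  by (simp add: UNIV_node add.assoc)

lemma all_node: "(\<forall>x::node. P x) \<longleftrightarrow> P na \<and> P nb \<and> P nc \<and> P nd"
  by (metis node.exhaust)

lemma Lz:
  fixes L :: mat4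
  assumes "\<forall>v w. \<not> dir_edge v w \<longrightarrow> L $ v $ w = 0"
  shows "L$na$na = 0" "L$nb$x = 0" "L$nc$x = 0" "L$nd$x = 0"
  using assms unfolding dir_edge_def by auto

lemma inv_IL:
  fixes L :: mat4
  assumes "\<forall>v w. \<not> dir_edge v w \<longrightarrow> L $ v $ w = 0"
  shows "matrix_inv (mat 1 - L) = mat 1 + L"
  apply (rule minv)
  using Lz[OF assms]
  by (simp_all add: vec_eq_iff matrix_matrix_mult_def sum_node mat_def all_node algebra_simps)

lemma entry:
  fixes L Om :: mat4
  assumes "\<forall>v w. \<not> dir_edge v w \<longrightarrow> L $ v $ w = 0"
  shows "(transpose (mat 1 + L) ** Om ** (mat 1 + L))$i$j =
     Om$i$j + L$na$i*Om$na$j + L$na$j*Om$i$na + L$na$i*L$na$j*Om$na$na"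
proof -
  have B: "(mat 1 + L)$k$i = (if k = i then 1 else 0) + (if k = na then L$na$i else 0)" for k i
    using Lz[OF assms] by (cases k) (auto simp: mat_def)
  show ?thesis
    unfolding matrix_matrix_mult_def transpose_def
    apply (simp only: vec_lambda_beta B)
    apply (simp add: sum_node algebra_simps)
    by (cases i; cases j; simp add: algebra_simps)
qed

lemma num:
  fixes L Om S :: mat4
  assumes L: "\<forall>v w. \<not> dir_edge v w \<longrightarrow> L $ v $ w = 0"
    and sy: "transpose Om = Om"
    and "Om $ x $ y = 0"
    and "S = transpose (mat 1 + L) ** Om ** (mat 1 + L)"
  shows "S$x$y * S$na$na - S$x$na * S$y$na = - (Om$x$na * Om$y$na)"
proof -
  have sym: "Om$i$j = Om$j$i" for i j using sy by (metis transpose_def vec_lambda_beta)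
  have z: "L$na$na = 0" using Lz[OF L] by simp
  show ?thesis unfolding assms(4) entry[OF L] using z assms(3) sym[of na y] sym[of na x]
    by (simp add: algebra_simps)
qed

lemma part1:
  assumes "S \<in> model_G"
  shows "pcorr S nb nc na * pcorr S nc nd na * pcorr S nb nd na \<le> 0"
proof -
  obtain L Om where L: "\<forall>v w. \<not> dir_edge v w \<longrightarrow> L $ v $ w = 0" and pd: "pos_def Om"
    and E: "\<forall>v w. v \<noteq> w \<and> \<not> bi_edge v w \<longrightarrow> Om $ v $ w = 0"
    and S: "S = transpose (matrix_inv (mat 1 - L)) ** Om ** matrix_inv (mat 1 - L)"
    using assms unfolding model_G_def by blast
  have S': "S = transpose (mat 1 + L) ** Om ** (mat 1 + L)" using S inv_IL[OF L] by simp
  have sy: "transpose Om = Om" using pd pos_def_def by blast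
  have e: "Om$nb$nc = 0" "Om$nc$nd = 0" "Om$nb$nd = 0" using E unfolding bi_edge_def by auto
  note n1 = num[OF L sy e(1) S'] and n2 = num[OF L sy e(2) S'] and n3 = num[OF L sy e(3) S']
  define p where "p = Om$nb$na * Om$nc$na * Om$nd$na"
  have "pcorr S nb nc na * pcorr S nc nd na * pcorr S nb nd na =
     (- (p^2)) / (sqrt ((S $ nb $ nb * S $ na $ na - (S $ nb $ na)^2) * (S $ nc $ nc * S $ na $ na - (S $ nc $ na)^2))
      * sqrt ((S $ nc $ nc * S $ na $ na - (S $ nc $ na)^2) * (S $ nd $ nd * S $ na $ na - (S $ nd $ na)^2))
      * sqrt ((S $ nb $ nb * S $ na $ na - (S $ nb $ na)^2) * (S $ nd $ nd * S $ na $ na - (S $ nd $ na)^2)))"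
    unfolding pcorr_def n1 n2 n3 p_def by (simp add: power2_eq_square algebra_simps)
  also have "\<dots> \<le> 0"
  proof (intro divide_nonpos_nonneg)
    fix u v w :: real
    have "sqrt (u * v) * sqrt (v * w) * sqrt (u * w) = sqrt ((u * v * w)^2)"
      by (simp add: real_sqrt_mult[symmetric] power2_eq_square algebra_simps)
    then show "sqrt (u * v) * sqrt (v * w) * sqrt (u * w) \<ge> 0" by simp
  qed simp
  finally show ?thesis .
qed

lemma lin: fixes A B C D E :: real
 assumes "A \<ge> 0" "B \<ge> 0" "C \<ge> 0" "D \<ge> 0" "E \<ge> 0" "A+B+C+D > 0" shows "A + (B+C+D)/2 + E/2 > 0"
proof -
  have "A + (B+C+D)/2 + E/2 = (A+B+C+D)/2 + A/2 + E/2" by (simp add: field_simps)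
  also have "\<dots> > 0" using assms by (intro add_pos_nonneg) auto
  finally show ?thesis .
qed

lemma Sigma0_pd: "pos_def Sigma0"
  unfolding pos_def_def
proof (intro conjI allI impI)
  show "transpose Sigma0 = Sigma0"
    by (simp add: vec_eq_iff transpose_def Sigma0_def all_node)
  fix x :: "real ^ node" assume "x \<noteq> 0"
  then have nz: "x$na \<noteq> 0 \<or> x$nb \<noteq> 0 \<or> x$nc \<noteq> 0 \<or> x$nd \<noteq> 0"
    by (auto simp: vec_eq_iff all_node)
  have "x \<bullet> (Sigma0 *v x) = (x$na)^2 + ((x$nb)^2 + (x$nc)^2 + (x$nd)^2)/2 + (x$nb + x$nc + x$nd)^2/2"
    by (simp add: inner_vec_def matrix_vector_mult_def Sigma0_def sum_node power2_eq_square field_simps)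
  also have "\<dots> > 0"
  proof -
    have "(x$na)^2 + (x$nb)^2 + (x$nc)^2 + (x$nd)^2 > 0"
      using nz by (smt (verit) zero_le_power2 zero_less_power2)
    then show ?thesis by (intro lin) simp_all
  qed
  finally show "x \<bullet> (Sigma0 *v x) > 0" .
qed

definition uu :: "node \<Rightarrow> mat4 \<Rightarrow> real" where
  "uu x S = S$x$x * S$na$na - (S$x$na)^2"

definition WW :: "mat4 set" where
  "WW = {S. uu nb S > 0 \<and> uu nc S > 0 \<and> uu nd S > 0}"

definition ff :: "mat4 \<Rightarrow> real" where
  "ff S = pcorr S nb nc na * pcorr S nc nd na * pcorr S nb nd na"

lemma cont_uu: "continuous_on A (uu x)"
  unfolding uu_def by (intro continuous_intros)

lemma open_WW: "open WW"
proof -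
  have e: "WW = {S. 0 < uu nb S} \<inter> {S. 0 < uu nc S} \<inter> {S. 0 < uu nd S}"
    unfolding WW_def by auto
  show ?thesis unfolding e
    by (intro open_Int open_Collect_less[OF continuous_on_const cont_uu])
qed

lemma cont_pcorr:
  assumes "\<forall>S\<in>A. uu x S > 0 \<and> uu y S > 0"
  shows "continuous_on A (\<lambda>S. pcorr S x y na)"
proof -
  have "continuous_on A (\<lambda>S. (S $ x $ y * S $ na $ na - S $ x $ na * S $ y $ na) / sqrt (uu x S * uu y S))"
    using assms by (intro continuous_intros cont_uu) auto
  then show ?thesis unfolding pcorr_def uu_def .
qed

lemma cont_ff: "continuous_on WW ff"
  unfolding ff_def
  by (intro continuous_on_mult cont_pcorr ballI conjI) (simp_all add: WW_def)

lemma part2: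
  "\<exists>U. openin (top_of_set {S. pos_def S}) U \<and> U \<noteq> {} \<and> Sigma0 \<in> U
         \<and> (\<forall>S \<in> U. pcorr S nb nc na * pcorr S nc nd na * pcorr S nb nd na > 0)
         \<and> U \<inter> model_G = {}"
proof -
  define V where "V = ff -` {0<..} \<inter> WW"
  have oV: "open V" unfolding V_def
    using continuous_on_open_vimage[OF open_WW] cont_ff open_greaterThan by blast
  have S0W: "Sigma0 \<in> WW" by (simp add: WW_def uu_def Sigma0_def)
  have S0f: "ff Sigma0 > 0" by (simp add: ff_def pcorr_def Sigma0_def)
  let ?U = "{S. pos_def S} \<inter> V"
  have "Sigma0 \<in> ?U" using Sigma0_pd S0W S0f by (simp add: V_def)
  moreover have "\<forall>S \<in> ?U. pcorr S nb nc na * pcorr S nc nd na * pcorr S nb nd na > 0"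
    unfolding V_def ff_def by simp
  moreover have "?U \<inter> model_G = {}"
  proof (rule ccontr)
    assume "?U \<inter> model_G \<noteq> {}"
    then obtain S where "S \<in> V" "S \<in> model_G" by blast
    then show False using part1[of S] unfolding V_def ff_def by simp
  qed
  ultimately show ?thesis using oV by (intro exI[of _ ?U]) auto
qed

theorem proposition2:
  shows "(\<forall>S \<in> model_G. pcorr S nb nc na * pcorr S nc nd na * pcorr S nb nd na \<le> 0)
    \<and> (\<exists>U. openin (top_of_set {S. pos_def S}) U \<and> U \<noteq> {} \<and> Sigma0 \<in> U
         \<and> (\<forall>S \<in> U. pcorr S nb nc na * pcorr S nc nd na * pcorr S nb nd na > 0)
         \<and> U \<inter> model_G = {})"
  using part1 part2 by blast

end
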